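(* Let $(G,\mathbf p)$ be a framework (with $\mathbf p$ pinned with $\ell$-dimensional affine span) and $E$ an energy that is stiff-bar at $\mathbf p$. An $\ell$-pinned configuration $\mathbf p'$ lies in the kernel of the Hessian $H_E(\mathbf p)$ of $E$ at $\mathbf p$ (as a function on $\ell$-pinned configuration space) if and only if $\mathbf p(t)=\mathbf p+\mathbf p't$ is a $(1,1)$-flex of $(G,\mathbf p)$ (or $\mathbf p'=0$), i.e. if and only if $\mathbf p'\in K$.
   Context: Fix a dimension $d$. A configuration is $\mathbf p=(\mathbf p_1,\dots,\mathbf p_n)$, $\mathbf p_i\in\mathbb R^d$; a framework $(G,\mathbf p)$ consists of a graph $G$ on $\{1,\dots,n\}$ and a configuration. A configuration $\mathbf q$ is in $\ell$-pinned position if $\mathbf q_1=0$ and, for $2\le i\le\ell+1$, $\mathbf q_i\in\mathrm{span}(e_1,\dots,e_{i-1})$; these form the $\ell$-pinned configuration space. $\mathbf p$ is pinned if it has $\ell$-dimensional affine span, $\mathbf p_1,\dots,\mathbf p_{\ell+1}$ are affinely independent, and $\mathbf p$ is in $\ell$-pinned position. A $(1,1)$-flex of $(G,\mathbf p)$ is an analytic non-constant $\ell$-pinned trajectory $\mathbf p(t)$, $\mathbf p(0)=\mathbf p$, with nonzero first derivative at $0$ and such that $\frac{d}{dt}|\mathbf p_i(t)-\mathbf p_j(t)|^2\big|_{t=0}=0$ for every edge $ij$. $K$ is the linear space of $\ell$-pinned $\mathbf p'$ with $(\mathbf p_v-\mathbf p_w)\cdot(\mathbf p'_v-\mathbf p'_w)=0$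 for all edges $vw$. A stiff-bar energy at $\mathbf p$ is $E(\mathbf q)=\sum_{ij\in E(G)}E_{ij}(|\mathbf q_i-\mathbf q_j|)$ on $\ell$-pinned configurations, where each $E_{ij}:\mathbb R\to\mathbb R$ is analytic at $d_{ij}=|\mathbf p_i-\mathbf p_j|\ne0$, has a strict local minimum at $d_{ij}$, and $E_{ij}''(d_{ij})>0$. *)

theory Defs
  imports "HOL-Analysis.Analysis"
begin

text \<open>Points live in real^'d::{finite,linorder}, where the finite index type 'd carries a linear
order; the coordinate k is the basis vector e_(crank k + 1) (crank is 0-based).
Vertices are 0,...,n-1 (vertex i here is vertex i+1 of the paper).
A configuration is a map nat => real^'d::{finite,linorder}, vanishing outside {..<n}.\<close>

definition crank :: "'d::{finite,linorder} \<Rightarrow> nat" where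
  "crank k = card {j. j < k}"

text \<open>l-pinned position: q_1 = 0 and q_i in span(e_1..e_(i-1)) for 2 <= i <= l+1
(paper indexing); here: for 0-based i <= l, all coordinates of rank >= i vanish.\<close>
definition pinned_pos :: "nat \<Rightarrow> nat \<Rightarrow> (nat \<Rightarrow> real^'d::{finite,linorder}) \<Rightarrow> bool" where
  "pinned_pos l n q \<longleftrightarrow> (\<forall>i. n \<le> i \<longrightarrow> q i = 0) \<and>
     (\<forall>i\<le>l. \<forall>k. i \<le> crank k \<longrightarrow> q i $ k = 0)"

definition pinned :: "nat \<Rightarrow> nat \<Rightarrow> (nat \<Rightarrow> real^'d::{finite,linorder}) \<Rightarrow> bool" where
  "pinned l n p \<longleftrightarrow> l + 1 \<le> n \<and> aff_dim (p ` {..<n}) = int l \<and>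
     inj_on p {..<l+1} \<and> \<not> affine_dependent (p ` {..<l+1}) \<and> pinned_pos l n p"

definition real_analytic_at :: "(real \<Rightarrow> real) \<Rightarrow> real \<Rightarrow> bool" where
  "real_analytic_at f x \<longleftrightarrow> (\<exists>r>0. \<exists>c::nat \<Rightarrow> real.
      \<forall>y. \<bar>y - x\<bar> < r \<longrightarrow> (\<lambda>k. c k * (y - x) ^ k) sums f y)"

definition graph_ok :: "nat \<Rightarrow> (nat \<times> nat) set \<Rightarrow> bool" where
  "graph_ok n Ed \<longleftrightarrow> (\<forall>(i,j)\<in>Ed. i < j \<and> j < n)"

definition stiff_bar :: "(nat \<times> nat) set \<Rightarrow> (nat \<Rightarrow> real^'d::{finite,linorder})
    \<Rightarrow> (nat \<Rightarrow> nat \<Rightarrow> real \<Rightarrow> real) \<Rightarrow> bool" where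
  "stiff_bar Ed p Ef \<longleftrightarrow> (\<forall>(i,j)\<in>Ed.
     let d = norm (p i - p j) in
       d \<noteq> 0 \<and> real_analytic_at (Ef i j) d \<and>
       (\<exists>r>0. \<forall>x. 0 < \<bar>x - d\<bar> \<and> \<bar>x - d\<bar> < r \<longrightarrow> Ef i j d < Ef i j x) \<and>
       deriv (deriv (Ef i j)) d > 0)"

definition energy :: "(nat \<times> nat) set \<Rightarrow> (nat \<Rightarrow> nat \<Rightarrow> real \<Rightarrow> real)
    \<Rightarrow> (nat \<Rightarrow> real^'d::{finite,linorder}) \<Rightarrow> real" where
  "energy Ed Ef q = (\<Sum>(i,j)\<in>Ed. Ef i j (norm (q i - q j)))"

definition hessian :: "((nat \<Rightarrow> real^'d::{finite,linorder}) \<Rightarrow> real) \<Rightarrow> (nat \<Rightarrow> real^'d::{finite,linorder})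
    \<Rightarrow> (nat \<Rightarrow> real^'d::{finite,linorder}) \<Rightarrow> (nat \<Rightarrow> real^'d::{finite,linorder}) \<Rightarrow> real" where
  "hessian E p u v = deriv (\<lambda>s. deriv (\<lambda>t. E (\<lambda>i. p i + s *\<^sub>R u i + t *\<^sub>R v i)) 0) 0"

definition hess_kernel :: "nat \<Rightarrow> nat \<Rightarrow> ((nat \<Rightarrow> real^'d::{finite,linorder}) \<Rightarrow> real)
    \<Rightarrow> (nat \<Rightarrow> real^'d::{finite,linorder}) \<Rightarrow> (nat \<Rightarrow> real^'d::{finite,linorder}) set" where
  "hess_kernel l n E p = {u. pinned_pos l n u \<and>
      (\<forall>v. pinned_pos l n v \<longrightarrow> hessian E p u v = 0)}"

definition Kspace :: "nat \<Rightarrow> nat \<Rightarrow> (nat \<times> nat) set \<Rightarrow> (nat \<Rightarrow> real^'d::{finite,linorder})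
    \<Rightarrow> (nat \<Rightarrow> real^'d::{finite,linorder}) set" where
  "Kspace l n Ed p = {u. pinned_pos l n u \<and>
      (\<forall>(i,j)\<in>Ed. (p i - p j) \<bullet> (u i - u j) = 0)}"

definition flex11 :: "nat \<Rightarrow> nat \<Rightarrow> (nat \<times> nat) set \<Rightarrow> (nat \<Rightarrow> real^'d::{finite,linorder})
    \<Rightarrow> (real \<Rightarrow> nat \<Rightarrow> real^'d::{finite,linorder}) \<Rightarrow> bool" where
  "flex11 l n Ed p P \<longleftrightarrow>
     (\<forall>i<n. \<forall>k. real_analytic_at (\<lambda>t. P t i $ k) 0) \<and>
     (\<forall>t. pinned_pos l n (P t)) \<and>
     (\<exists>t. P t \<noteq> P 0) \<and> P 0 = p \<and>
     (\<exists>i<n. vector_derivative (\<lambda>t. P t i) (at 0) \<noteq> 0) \<and>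
     (\<forall>(i,j)\<in>Ed. deriv (\<lambda>t. (norm (P t i - P t j))\<^sup>2) 0 = 0)"

end

theory Submission
  imports Defs
begin

lemma analytic_props:
  assumes "real_analytic_at f d"
  shows "\<exists>r>0. (\<forall>y. \<bar>y - d\<bar> < r \<longrightarrow> (f has_real_derivative deriv f y) (at y)) \<and>
     (deriv f has_real_derivative deriv (deriv f) d) (at d)"
proof -
  obtain r c where r: "r > 0" and c: "\<And>y. \<bar>y - d\<bar> < r \<Longrightarrow> (\<lambda>k. c k * (y - d) ^ k) sums f y"
    using assms unfolding real_analytic_at_def by blast
  define F where "F z = (\<Sum>k. c k * z ^ k)" for z :: real
  define F1 where "F1 z = (\<Sum>k. diffs c k * z ^ k)" for z :: real
  define F2 where "F2 z = (\<Sum>k. diffs (diffs c) k * z ^ k)" for z :: real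
  have s0: "summable (\<lambda>k. c k * z ^ k)" if "norm z < r" for z
    using c[of "d + z"] that by (auto simp: sums_iff)
  have s1: "summable (\<lambda>k. diffs c k * z ^ k)" if "norm z < r" for z
    by (rule termdiff_converges[OF that s0])
  have fF: "f y = F (y - d)" if "\<bar>y - d\<bar> < r" for y
    using c[OF that] unfolding F_def by (simp add: sums_iff)
  have dF: "(F has_real_derivative F1 z) (at z)" and dF1: "(F1 has_real_derivative F2 z) (at z)"
    if "\<bar>z\<bar> < r" for z
  proof -
    define K where "K = (\<bar>z\<bar> + r) / 2"
    have K: "norm z < norm K" "norm K < r" using that r by (auto simp: K_def)
    show "(F has_real_derivative F1 z) (at z)"
      unfolding F_def F1_def by (rule termdiffs_strong[OF s0[OF K(2)] K(1)])
    show "(F1 has_real_derivative F2 z) (at z)"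
      unfolding F1_def F2_def by (rule termdiffs_strong[OF s1[OF K(2)] K(1)])
  qed
  have df: "(f has_real_derivative F1 (y - d)) (at y)" if y: "\<bar>y - d\<bar> < r" for y
  proof -
    have "((\<lambda>y. F (y - d)) has_real_derivative F1 (y - d) * 1) (at y)"
      by (rule DERIV_chain2[OF dF]) (use y in \<open>auto intro!: derivative_eq_intros\<close>)
    moreover have "\<forall>\<^sub>F x in nhds y. f x = F (x - d)"
    proof -
      have "open {x. \<bar>x - d\<bar> < r}" by (auto intro!: open_Collect_less continuous_intros)
      then have "\<forall>\<^sub>F x in nhds y. x \<in> {x. \<bar>x - d\<bar> < r}" using y by (intro eventually_nhds_in_open) auto
      then show ?thesis by eventually_elim (auto intro: fF)
    qed
    ultimately show ?thesis using DERIV_cong_ev[of y y f "\<lambda>y. F (y - d)"] by simp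
  qed
  have dd: "deriv f y = F1 (y - d)" if "\<bar>y - d\<bar> < r" for y using df[OF that] by (rule DERIV_imp_deriv)
  have "((\<lambda>y. F1 (y - d)) has_real_derivative F2 (d - d) * 1) (at d)"
    by (rule DERIV_chain2[OF dF1]) (use r in \<open>auto intro!: derivative_eq_intros\<close>)
  moreover have "\<forall>\<^sub>F x in nhds d. deriv f x = F1 (x - d)"
  proof -
    have "open {x. \<bar>x - d\<bar> < r}" by (auto intro!: open_Collect_less continuous_intros)
    then have "\<forall>\<^sub>F x in nhds d. x \<in> {x. \<bar>x - d\<bar> < r}" using r by (intro eventually_nhds_in_open) auto
    then show ?thesis by eventually_elim (auto intro: dd)
  qed
  ultimately have "(deriv f has_real_derivative F2 0) (at d)"
    using DERIV_cong_ev[of d d "deriv f" "\<lambda>y. F1 (y - d)"] by simp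
  then have "(deriv f has_real_derivative deriv (deriv f) d) (at d)"
    using DERIV_imp_deriv by metis
  moreover have "\<forall>y. \<bar>y - d\<bar> < r \<longrightarrow> (f has_real_derivative deriv f y) (at y)"
    using df dd by simp
  ultimately show ?thesis using r by blast
qed


lemma edge_deriv:
  fixes f :: "real \<Rightarrow> real" and A B C X Y Z r :: real
  defines "Q \<equiv> \<lambda>s t. A + 2 * s * B + 2*t*C + s^2*X + 2 * s * t*Z + t^2*Y"
  defines "h \<equiv> \<lambda>s. deriv f (sqrt (Q s 0)) * ((C + s*Z) / sqrt (Q s 0))"
  assumes A: "A > 0" and r: "r > 0"
    and df: "\<forall>y. \<bar>y - sqrt A\<bar> < r \<longrightarrow> (f has_real_derivative deriv f y) (at y)"
    and ddf: "(deriv f has_real_derivative deriv (deriv f) (sqrt A)) (at (sqrt A))"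
    and z: "deriv f (sqrt A) = 0"
  shows "\<forall>\<^sub>F s in nhds 0. ((\<lambda>t. f (sqrt (Q s t))) has_real_derivative h s) (at 0)"
    and "(h has_real_derivative deriv (deriv f) (sqrt A) * B * C / A) (at 0)"
proof -
  have cont: "isCont (\<lambda>s. sqrt (Q s 0)) 0" unfolding Q_def by (intro continuous_intros)
  obtain e where e: "e > 0" and he: "\<And>s. dist s 0 < e \<Longrightarrow> dist (sqrt (Q s 0)) (sqrt (Q 0 0)) < min r (sqrt A)"
    using cont[unfolded continuous_at_eps_delta, rule_format, of "min r (sqrt A)"] A r by auto
  have Q00: "Q 0 0 = A" by (simp add: Q_def)
  show "\<forall>\<^sub>F s in nhds 0. ((\<lambda>t. f (sqrt (Q s t))) has_real_derivative h s) (at 0)"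
    unfolding eventually_nhds_metric
  proof (intro exI[of _ e] conjI allI impI e)
    fix s :: real assume "dist s 0 < e"
    from he[OF this] have s1: "\<bar>sqrt (Q s 0) - sqrt A\<bar> < r" and s2: "\<bar>sqrt (Q s 0) - sqrt A\<bar> < sqrt A"
      by (auto simp: Q00 dist_real_def)
    have pos: "sqrt (Q s 0) > 0" using s2 by linarith
    then have posQ: "Q s 0 > 0" by simp
    have dq: "((\<lambda>t. sqrt (Q s t)) has_real_derivative inverse (sqrt (Q s 0)) / 2 * (2*C + 2 * s * Z)) (at 0)"
      unfolding Q_def using posQ[unfolded Q_def]
      by (auto intro!: derivative_eq_intros DERIV_chain2[OF DERIV_real_sqrt])
    show "((\<lambda>t. f (sqrt (Q s t))) has_real_derivative h s) (at 0)"
      unfolding h_def by (rule DERIV_cong[OF DERIV_chain2[OF df[rule_format, OF s1] dq]]) (use pos in \<open>simp add: field_simps\<close>)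
  qed
  have sA: "sqrt A > 0" using A by simp
  have d1: "((\<lambda>s. sqrt (Q s 0)) has_real_derivative inverse (sqrt A) / 2 * (2*B)) (at 0)"
    unfolding Q_def using A
    by (auto intro!: derivative_eq_intros DERIV_chain2[OF DERIV_real_sqrt])
  have d2: "((\<lambda>s. deriv f (sqrt (Q s 0))) has_real_derivative deriv (deriv f) (sqrt A) * (inverse (sqrt A) / 2 * (2*B))) (at 0)"
    using DERIV_chain2[OF _ d1, of "deriv f"] ddf Q00 by simp
  have dCZ: "((\<lambda>s. C + s*Z) has_real_derivative Z) (at 0)"
    by (auto intro!: derivative_eq_intros)
  have d3: "((\<lambda>s. (C + s*Z) / sqrt (Q s 0)) has_real_derivative
          (Z * sqrt (Q 0 0) - (C + 0*Z) * (inverse (sqrt A) / 2 * (2*B))) / (sqrt (Q 0 0) * sqrt (Q 0 0))) (at 0)"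
    by (rule DERIV_divide[OF dCZ d1]) (use sA Q00 in simp)
  show "(h has_real_derivative deriv (deriv f) (sqrt A) * B * C / A) (at 0)"
    unfolding h_def
    by (rule DERIV_cong[OF DERIV_mult[OF d2 d3]]) (use Q00 z sA A in \<open>simp add: field_simps\<close>)
qed


lemma edge_vec:
  fixes a x y :: "real^'d::{finite,linorder}" and f :: "real \<Rightarrow> real"
  assumes a: "a \<noteq> 0" and an: "real_analytic_at f (norm a)"
    and mn: "\<exists>r>0. \<forall>z. 0 < \<bar>z - norm a\<bar> \<and> \<bar>z - norm a\<bar> < r \<longrightarrow> f (norm a) < f z"
  shows "\<exists>h. (\<forall>\<^sub>F s in nhds 0. ((\<lambda>t. f (norm (a + s *\<^sub>R x + t *\<^sub>R y))) has_real_derivative h s) (at 0))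
     \<and> (h has_real_derivative deriv (deriv f) (norm a) * (a \<bullet> x) * (a \<bullet> y) / (norm a)^2) (at 0)"
proof -
  define A where "A = a \<bullet> a"
  define B where "B = a \<bullet> x"
  define C where "C = a \<bullet> y"
  define X where "X = x \<bullet> x"
  define Y where "Y = y \<bullet> y"
  define Z where "Z = x \<bullet> y"
  have nq: "norm (a + s *\<^sub>R x + t *\<^sub>R y) = sqrt (A + 2 * s * B + 2 * t * C + s^2 * X + 2 * s * t * Z + t^2 * Y)" for s t
    unfolding norm_eq_sqrt_inner A_def B_def C_def X_def Y_def Z_def
    by (simp add: inner_add_left inner_add_right inner_commute power2_eq_square algebra_simps)
  have sA: "sqrt A = norm a" by (simp add: A_def norm_eq_sqrt_inner)
  have A: "A > 0" using a by (simp add: A_def)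
  obtain r where r: "r > 0" and df: "\<forall>y. \<bar>y - norm a\<bar> < r \<longrightarrow> (f has_real_derivative deriv f y) (at y)"
    and ddf: "(deriv f has_real_derivative deriv (deriv f) (norm a)) (at (norm a))"
    using analytic_props[OF an] by blast
  obtain r2 where r2: "r2 > 0" and m: "\<forall>z. 0 < \<bar>z - norm a\<bar> \<and> \<bar>z - norm a\<bar> < r2 \<longrightarrow> f (norm a) < f z"
    using mn by blast
  have z: "deriv f (norm a) = 0"
  proof (rule DERIV_local_min[OF _ r2])
    show "(f has_real_derivative deriv f (norm a)) (at (norm a))" using df r by simp
    show "\<forall>z. \<bar>norm a - z\<bar> < r2 \<longrightarrow> f (norm a) \<le> f z"
    proof (intro allI impI)
      fix z assume "\<bar>norm a - z\<bar> < r2"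
      then show "f (norm a) \<le> f z" using m[rule_format, of z] by (cases "z = norm a") (auto simp: abs_minus_commute)
    qed
  qed
  note E = edge_deriv[where A=A and B=B and C=C and X=X and Y=Y and Z=Z and r=r and f=f, unfolded sA, OF A r df ddf z]
  have "norm a ^ 2 = A" using sA A by (metis real_sqrt_pow2 less_imp_le)
  then show ?thesis using E unfolding nq by (intro exI[of _ "\<lambda>s. deriv f (sqrt (A + 2 * s * B + 2 * 0 * C + s\<^sup>2 * X + 2 * s * 0 * Z + 0\<^sup>2 * Y)) * ((C + s * Z) / sqrt (A + 2 * s * B + 2 * 0 * C + s\<^sup>2 * X + 2 * s * 0 * Z + 0\<^sup>2 * Y))"]) (simp add: B_def C_def)
qed


lemma hess_formula:
  fixes p u v :: "nat \<Rightarrow> real^'d::{finite,linorder}"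
  assumes g: "graph_ok n Ed" and sb: "stiff_bar Ed p Ef"
  shows "hessian (energy Ed Ef) p u v =
    (\<Sum>(i,j)\<in>Ed. deriv (deriv (Ef i j)) (norm (p i - p j)) * ((p i - p j) \<bullet> (u i - u j))
        * ((p i - p j) \<bullet> (v i - v j)) / (norm (p i - p j))^2)"
proof -
  have fin: "finite Ed"
  proof (rule finite_subset)
    show "Ed \<subseteq> {..<n} \<times> {..<n}" using g unfolding graph_ok_def by auto
  qed auto
  define G where "G e s t = (case e of (i,j) \<Rightarrow> Ef i j (norm ((p i + s *\<^sub>R u i + t *\<^sub>R v i) - (p j + s *\<^sub>R u j + t *\<^sub>R v j))))" for e s t
  define c where "c e = (case e of (i,j) \<Rightarrow> deriv (deriv (Ef i j)) (norm (p i - p j)) * ((p i - p j) \<bullet> (u i - u j))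
        * ((p i - p j) \<bullet> (v i - v j)) / (norm (p i - p j))^2)" for e
  have "\<forall>e\<in>Ed. \<exists>h. (\<forall>\<^sub>F s in nhds 0. ((\<lambda>t. G e s t) has_real_derivative h s) (at 0))
     \<and> (h has_real_derivative c e) (at 0)"
  proof
    fix e assume e: "e \<in> Ed"
    obtain i j where ij: "e = (i,j)" by force
    have st: "norm (p i - p j) \<noteq> 0 \<and> real_analytic_at (Ef i j) (norm (p i - p j)) \<and>
       (\<exists>r>0. \<forall>x. 0 < \<bar>x - norm (p i - p j)\<bar> \<and> \<bar>x - norm (p i - p j)\<bar> < r \<longrightarrow> Ef i j (norm (p i - p j)) < Ef i j x)"
      using sb e ij unfolding stiff_bar_def by (auto simp: Let_def)
    have eq: "(p i + s *\<^sub>R u i + t *\<^sub>R v i) - (p j + s *\<^sub>R u j + t *\<^sub>R v j)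
       = (p i - p j) + s *\<^sub>R (u i - u j) + t *\<^sub>R (v i - v j)" for s t
      by (simp add: algebra_simps)
    have eq2: "G e s t = Ef i j (norm ((p i - p j) + s *\<^sub>R (u i - u j) + t *\<^sub>R (v i - v j)))" for s t
      unfolding G_def ij prod.case eq ..
    have c2: "c e = deriv (deriv (Ef i j)) (norm (p i - p j)) * ((p i - p j) \<bullet> (u i - u j))
        * ((p i - p j) \<bullet> (v i - v j)) / (norm (p i - p j))^2" unfolding c_def ij by simp
    from edge_vec[of "p i - p j" "Ef i j" "u i - u j" "v i - v j"] st
    show "\<exists>h. (\<forall>\<^sub>F s in nhds 0. ((\<lambda>t. G e s t) has_real_derivative h s) (at 0))
     \<and> (h has_real_derivative c e) (at 0)"
      unfolding eq2 c2 by simp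
  qed
  then obtain H where H: "\<And>e. e \<in> Ed \<Longrightarrow> (\<forall>\<^sub>F s in nhds 0. ((\<lambda>t. G e s t) has_real_derivative H e s) (at 0))
     \<and> (H e has_real_derivative c e) (at 0)"
    by metis
  have en: "energy Ed Ef (\<lambda>i. p i + s *\<^sub>R u i + t *\<^sub>R v i) = (\<Sum>e\<in>Ed. G e s t)" for s t
    unfolding energy_def G_def by (simp add: case_prod_beta)
  have ev: "\<forall>\<^sub>F s in nhds 0. \<forall>e\<in>Ed. ((\<lambda>t. G e s t) has_real_derivative H e s) (at 0)"
    using H by (intro eventually_ball_finite fin) auto
  have ev2: "\<forall>\<^sub>F s in nhds 0. deriv (\<lambda>t. energy Ed Ef (\<lambda>i. p i + s *\<^sub>R u i + t *\<^sub>R v i)) 0 = (\<Sum>e\<in>Ed. H e s)"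
    using ev
  proof eventually_elim
    case (elim s)
    show ?case unfolding en by (rule DERIV_imp_deriv, rule DERIV_sum) (use elim in auto)
  qed
  have "((\<lambda>s. \<Sum>e\<in>Ed. H e s) has_real_derivative (\<Sum>e\<in>Ed. c e)) (at 0)"
    by (rule DERIV_sum) (use H in auto)
  then have "((\<lambda>s. deriv (\<lambda>t. energy Ed Ef (\<lambda>i. p i + s *\<^sub>R u i + t *\<^sub>R v i)) 0) has_real_derivative (\<Sum>e\<in>Ed. c e)) (at 0)"
    using DERIV_cong_ev[OF refl ev2 refl] by simp
  then have "hessian (energy Ed Ef) p u v = (\<Sum>e\<in>Ed. c e)"
    unfolding hessian_def by (rule DERIV_imp_deriv)
  then show ?thesis unfolding c_def by (simp add: case_prod_beta)
qed


lemma analytic_affine: "real_analytic_at (\<lambda>t. a + t * b) 0"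
  unfolding real_analytic_at_def
proof (intro exI[of _ 1] conjI exI[of _ "\<lambda>k. if k = 0 then a else if k = 1 then b else 0"] allI impI)
  fix y :: real
  have "(\<lambda>k. (if k = 0 then a else if k = 1 then b else 0) * (y - 0) ^ k) sums
        (\<Sum>k\<in>{0,1}. (if k = 0 then a else if k = 1 then b else 0) * (y - 0) ^ k)"
    by (rule sums_finite) auto
  then show "(\<lambda>k. (if k = 0 then a else if k = 1 then b else 0) * (y - 0) ^ k) sums (a + y * b)"
    by (simp add: mult.commute)
qed simp

lemma deriv_sq: fixes a x :: "real^'d::{finite,linorder}"
  shows "deriv (\<lambda>t. (norm (a + t *\<^sub>R x))\<^sup>2) 0 = 2 * (a \<bullet> x)"
proof -
  have eq: "(norm (a + t *\<^sub>R x))\<^sup>2 = a \<bullet> a + 2 * t * (a \<bullet> x) + t^2 * (x \<bullet> x)" for t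
    unfolding power2_norm_eq_inner by (simp add: inner_add_left inner_add_right inner_commute power2_eq_square algebra_simps)
  have "((\<lambda>t. a \<bullet> a + 2 * t * (a \<bullet> x) + t^2 * (x \<bullet> x)) has_real_derivative 2 * (a \<bullet> x)) (at 0)"
    by (auto intro!: derivative_eq_intros)
  then show ?thesis unfolding eq by (rule DERIV_imp_deriv)
qed

lemma flex_iff:
  fixes p u :: "nat \<Rightarrow> real^'d::{finite,linorder}"
  assumes pp: "pinned_pos l n p" and pu: "pinned_pos l n u"
  shows "flex11 l n Ed p (\<lambda>t i. p i + t *\<^sub>R u i) \<longleftrightarrow>
     u \<noteq> (\<lambda>i. 0) \<and> (\<forall>(i,j)\<in>Ed. (p i - p j) \<bullet> (u i - u j) = 0)"
proof -
  have an: "\<forall>i<n. \<forall>k. real_analytic_at (\<lambda>t. (p i + t *\<^sub>R u i) $ k) 0"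
    using analytic_affine by simp
  have pt: "\<forall>t. pinned_pos l n (\<lambda>i. p i + t *\<^sub>R u i)"
    using pp pu unfolding pinned_pos_def by simp
  have nc: "(\<exists>t. (\<lambda>i. p i + t *\<^sub>R u i) \<noteq> (\<lambda>i. p i + 0 *\<^sub>R u i)) \<longleftrightarrow> u \<noteq> (\<lambda>i. 0)"
  proof
    assume "\<exists>t. (\<lambda>i. p i + t *\<^sub>R u i) \<noteq> (\<lambda>i. p i + 0 *\<^sub>R u i)"
    then show "u \<noteq> (\<lambda>i. 0)" by auto
  next
    assume "u \<noteq> (\<lambda>i. 0)"
    then obtain i where "u i \<noteq> 0" by auto
    then show "\<exists>t. (\<lambda>i. p i + t *\<^sub>R u i) \<noteq> (\<lambda>i. p i + 0 *\<^sub>R u i)"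
      by (intro exI[of _ 1]) (auto dest: fun_cong[of _ _ i])
  qed
  have vd: "vector_derivative (\<lambda>t. p i + t *\<^sub>R u i) (at 0) = u i" for i
    by (rule vector_derivative_at) (auto intro!: derivative_eq_intros)
  have vd2: "(\<exists>i<n. vector_derivative (\<lambda>t. p i + t *\<^sub>R u i) (at 0) \<noteq> 0) \<longleftrightarrow> u \<noteq> (\<lambda>i. 0)"
    unfolding vd using pu unfolding pinned_pos_def by (metis not_le)
  have ed: "deriv (\<lambda>t. (norm ((p i + t *\<^sub>R u i) - (p j + t *\<^sub>R u j)))\<^sup>2) 0 = 2 * ((p i - p j) \<bullet> (u i - u j))" for i j
  proof -
    have e: "(p i + t *\<^sub>R u i) - (p j + t *\<^sub>R u j) = (p i - p j) + t *\<^sub>R (u i - u j)" for t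
      by (simp add: algebra_simps)
    show ?thesis unfolding e by (rule deriv_sq)
  qed
  show ?thesis unfolding flex11_def using an pt nc vd2
    by (simp add: ed)
qed


theorem lemma7p1:
  fixes p u :: "nat \<Rightarrow> real^'d::{finite,linorder}"
    and Ed :: "(nat \<times> nat) set" and Ef :: "nat \<Rightarrow> nat \<Rightarrow> real \<Rightarrow> real"
    and n l :: nat
  assumes "graph_ok n Ed"
    and "pinned l n p"
    and "stiff_bar Ed p Ef"
    and "pinned_pos l n u"
  shows "(u \<in> hess_kernel l n (energy Ed Ef) p \<longleftrightarrow>
            (u = (\<lambda>i. 0) \<or> flex11 l n Ed p (\<lambda>t i. p i + t *\<^sub>R u i)))
       \<and> (u \<in> hess_kernel l n (energy Ed Ef) p \<longleftrightarrow> u \<in> Kspace l n Ed p)"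
proof -
  note g = assms(1) and sb = assms(3) and pu = assms(4)
  have pp: "pinned_pos l n p" using assms(2) unfolding pinned_def by simp
  have fin: "finite Ed"
  proof (rule finite_subset)
    show "Ed \<subseteq> {..<n} \<times> {..<n}" using g unfolding graph_ok_def by auto
  qed auto
  have pos: "deriv (deriv (Ef i j)) (norm (p i - p j)) > 0" "norm (p i - p j) \<noteq> 0" if "(i,j) \<in> Ed" for i j
    using sb that unfolding stiff_bar_def by (auto simp: Let_def)
  have KK: "u \<in> hess_kernel l n (energy Ed Ef) p \<longleftrightarrow> u \<in> Kspace l n Ed p"
  proof
    assume "u \<in> hess_kernel l n (energy Ed Ef) p"
    then have "hessian (energy Ed Ef) p u u = 0" using pu unfolding hess_kernel_def by simp
    then have s0: "(\<Sum>e\<in>Ed. (case e of (i,j) \<Rightarrow> deriv (deriv (Ef i j)) (norm (p i - p j)) * ((p i - p j) \<bullet> (u i - u j))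
        * ((p i - p j) \<bullet> (u i - u j)) / (norm (p i - p j))^2)) = 0"
      unfolding hess_formula[OF g sb] by simp
    have "\<forall>e\<in>Ed. (case e of (i,j) \<Rightarrow> deriv (deriv (Ef i j)) (norm (p i - p j)) * ((p i - p j) \<bullet> (u i - u j))
        * ((p i - p j) \<bullet> (u i - u j)) / (norm (p i - p j))^2) = 0"
    proof (rule sum_nonneg_eq_0_iff[OF fin, THEN iffD1, OF _ s0])
      fix e assume e: "e \<in> Ed"
      obtain i j where ij: "e = (i,j)" by force
      have "0 \<le> deriv (deriv (Ef i j)) (norm (p i - p j)) * ((p i - p j) \<bullet> (u i - u j))
        * ((p i - p j) \<bullet> (u i - u j)) / (norm (p i - p j))^2"
        using pos(1)[of i j] e ij by (simp add: mult.assoc)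
      then show "0 \<le> (case e of (i,j) \<Rightarrow> deriv (deriv (Ef i j)) (norm (p i - p j)) * ((p i - p j) \<bullet> (u i - u j))
        * ((p i - p j) \<bullet> (u i - u j)) / (norm (p i - p j))^2)"
        using ij by simp
    qed
    then have "\<forall>(i,j)\<in>Ed. (p i - p j) \<bullet> (u i - u j) = 0"
      using pos by (force split: prod.splits)
    then show "u \<in> Kspace l n Ed p" using pu unfolding Kspace_def by simp
  next
    assume "u \<in> Kspace l n Ed p"
    then have k: "\<forall>(i,j)\<in>Ed. (p i - p j) \<bullet> (u i - u j) = 0" unfolding Kspace_def by simp
    show "u \<in> hess_kernel l n (energy Ed Ef) p"
      unfolding hess_kernel_def hess_formula[OF g sb] using pu k
      by (auto intro!: sum.neutral)
  qed
  have z: "(\<lambda>i. 0) \<in> Kspace l n Ed p" unfolding Kspace_def pinned_pos_def by simp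
  have "(u = (\<lambda>i. 0) \<or> flex11 l n Ed p (\<lambda>t i. p i + t *\<^sub>R u i)) \<longleftrightarrow> u \<in> Kspace l n Ed p"
    unfolding flex_iff[OF pp pu] using z pu unfolding Kspace_def by auto
  with KK show ?thesis by simp
qed

end
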